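(* Define $f:\mathbb{Z}_{\ge 1}\to\mathbb{R}$ by $f(1)=1$, $f(2)=f(3)=2$, and for $n \ge 4$: $f(n)=4\cdot 3^{n/5-1}$ if $n\equiv 0 \pmod 5$; $f(n)=5\cdot 3^{(n-6)/5}$ if $n\equiv 1 \pmod 5$; $f(n)=2\cdot 3^{(n-2)/5}$ if $n\equiv 2 \pmod 5$; $f(n)=8\cdot 3^{(n-8)/5}$ if $n\equiv 3 \pmod 5$; $f(n)=3^{(n+1)/5}$ if $n\equiv 4 \pmod 5$. Then: (a) for all integers $n,m \ge 2$ with $(n,m)\neq(3,3)$, $f(n)f(m) \ge f(n+m)$; and (b) for all integers $n,m \ge 5$, $f(n-1)f(m-1) \ge f(n+m-1)$. *)

theory Defs
  imports Complex_Main
begin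

text \<open>The function f on positive integers (value at 0 is an irrelevant convention).
  For n >= 4 all exponents below are nonnegative integers, so nat division is exact.\<close>
definition f :: "nat \<Rightarrow> real" where
  "f n = (if n = 0 then 0
          else if n = 1 then 1
          else if n = 2 \<or> n = 3 then 2
          else if n mod 5 = 0 then 4 * 3 ^ (n div 5 - 1)
          else if n mod 5 = 1 then 5 * 3 ^ ((n - 6) div 5)
          else if n mod 5 = 2 then 2 * 3 ^ ((n - 2) div 5)
          else if n mod 5 = 3 then 8 * 3 ^ ((n - 8) div 5)
          else 3 ^ ((n + 1) div 5))"

end

theory Submission
  imports Defs
begin

lemma f_step: assumes "n \<ge> 4" shows "f (n + 5) = 3 * f n"
proof -
  obtain q r where n: "n = 5*q + r" and r: "r < 5" by (metis mod_less_divisor div_mult_mod_eq mult.commute zero_less_numeral)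
  have "r = 0 \<or> r = 1 \<or> r = 2 \<or> r = 3 \<or> r = 4" using r by auto
  then show ?thesis
  proof (elim disjE)
    assume "r = 4" then show ?thesis using n by (simp add: f_def)
  next
    assume h: "r = 0" 
    then obtain k where "q = Suc k" using n assms by (cases q) auto
    then show ?thesis using n h by (simp add: f_def)
  next
    assume h: "r = 1" 
    then obtain k where "q = Suc k" using n assms by (cases q) auto
    then show ?thesis using n h by (simp add: f_def)
  next
    assume h: "r = 2" 
    then obtain k where "q = Suc k" using n assms by (cases q) auto
    then show ?thesis using n h by (simp add: f_def)
  next
    assume h: "r = 3" 
    then obtain k where "q = Suc k" using n assms by (cases q) auto
    then show ?thesis using n h by (simp add: f_def)
  qed
qed
lemma fv: "f 2 = 2" "f 3 = 2" "f 4 = 3" "f 5 = 4" "f 6 = 5" "f 7 = 6" "f 8 = 8" "f 9 = 9" "f 10 = 12"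
 "f 11 = 15" "f 12 = 18" "f 13 = 24" "f 14 = 27" "f 15 = 36" "f 16 = 45" "f 17 = 54"
  by (simp_all add: f_def)

lemma partA: "n \<ge> 2 \<Longrightarrow> m \<ge> 2 \<Longrightarrow> (n, m) \<noteq> (3, 3) \<Longrightarrow> f n * f m \<ge> f (n + m)"
proof (induction "n + m" arbitrary: n m rule: less_induct)
  case less
  show ?case
  proof (cases "n \<ge> 9")
    case True
    have "f (n - 5) * f m \<ge> f (n - 5 + m)" using less True by (intro less.hyps) auto
    moreover have "f n = 3 * f (n - 5)" using f_step[of "n-5"] True by simp
    moreover have "f (n + m) = 3 * f (n - 5 + m)" using f_step[of "n-5+m"] True by simp
    ultimately show ?thesis by simp
  next
    case F1: False
    show ?thesis
    proof (cases "m \<ge> 9")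
      case True
      have "f n * f (m - 5) \<ge> f (n + (m - 5))" using less True by (intro less.hyps) auto
      moreover have "f m = 3 * f (m - 5)" using f_step[of "m-5"] True by simp
      moreover have "f (n + m) = 3 * f (n + (m - 5))" using f_step[of "n+(m-5)"] True by simp
      ultimately show ?thesis by simp
    next
      case False
      have "n = 2 \<or> n = 3 \<or> n = 4 \<or> n = 5 \<or> n = 6 \<or> n = 7 \<or> n = 8" using F1 less by auto
      moreover have "m = 2 \<or> m = 3 \<or> m = 4 \<or> m = 5 \<or> m = 6 \<or> m = 7 \<or> m = 8" using False less by auto
      ultimately show ?thesis using less(4) by (elim disjE) (simp_all add: fv)
    qed
  qed
qed

lemma partB: "a \<ge> 4 \<Longrightarrow> b \<ge> 4 \<Longrightarrow> f a * f b \<ge> f (a + b + 1)"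
proof (induction "a + b" arbitrary: a b rule: less_induct)
  case less
  show ?case
  proof (cases "a \<ge> 9")
    case True
    have "f (a - 5) * f b \<ge> f (a - 5 + b + 1)" using less True by (intro less.hyps) auto
    moreover have "f a = 3 * f (a - 5)" using f_step[of "a-5"] True by simp
    moreover have "f (a + b + 1) = 3 * f (a - 5 + b + 1)" using f_step[of "a-5+b+1"] True by simp
    ultimately show ?thesis by simp
  next
    case F1: False
    show ?thesis
    proof (cases "b \<ge> 9")
      case True
      have "f a * f (b - 5) \<ge> f (a + (b - 5) + 1)" using less True by (intro less.hyps) auto
      moreover have "f b = 3 * f (b - 5)" using f_step[of "b-5"] True by simp
      moreover have "f (a + b + 1) = 3 * f (a + (b - 5) + 1)" using f_step[of "a+(b-5)+1"] True by simp
      ultimately show ?thesis by simp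
    next
      case False
      have "a = 4 \<or> a = 5 \<or> a = 6 \<or> a = 7 \<or> a = 8" using F1 less by auto
      moreover have "b = 4 \<or> b = 5 \<or> b = 6 \<or> b = 7 \<or> b = 8" using False less by auto
      ultimately show ?thesis by (elim disjE) (simp_all add: fv)
    qed
  qed
qed

theorem lemma4p1:
  shows "(\<forall>n m :: nat. n \<ge> 2 \<and> m \<ge> 2 \<and> (n, m) \<noteq> (3, 3) \<longrightarrow> f n * f m \<ge> f (n + m))
       \<and> (\<forall>n m :: nat. n \<ge> 5 \<and> m \<ge> 5 \<longrightarrow> f (n - 1) * f (m - 1) \<ge> f (n + m - 1))"
proof (intro conjI allI impI)
  fix n m :: nat assume "n \<ge> 2 \<and> m \<ge> 2 \<and> (n, m) \<noteq> (3, 3)"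
  then show "f n * f m \<ge> f (n + m)" using partA by blast
next
  fix n m :: nat assume h: "n \<ge> 5 \<and> m \<ge> 5"
  then have "f (n - 1) * f (m - 1) \<ge> f (n - 1 + (m - 1) + 1)" by (intro partB) auto
  moreover have "n - 1 + (m - 1) + 1 = n + m - 1" using h by linarith
  ultimately show "f (n - 1) * f (m - 1) \<ge> f (n + m - 1)" by metis
qed

end
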